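(* Let $X$ be a $k$-regular distance regular graph of diameter $d$, and let $Y_i$ be the $i$-th distance digraph of $\mathrm{LD}(X)$. Then: (i) the matrices $S(Y_0),S(Y_1),\dots,S(Y_{d+1})$ are linearly dependent; (ii) for all $i,j\in\{0,1,\dots,d+1\}$, $S(Y_i)S(Y_j)=S(Y_j)S(Y_i)$.
   Context: $X$ is a connected distance regular graph (for vertices $u,v$ at distance $\ell$, the number of vertices at distance $i$ from $u$ and $j$ from $v$ depends only on $i,j,\ell$). Each edge $\{a,b\}$ of $X$ is replaced by arcs $(a,b)$ and $(b,a)$; the line digraph $\mathrm{LD}(X)$ has the arcs as vertices, with an arc from $(a,b)$ to $(c,d)$ iff $b=c$. For a digraph $Y$, its $i$-th distance digraph $Y_i$ has the same vertex set, with $a$ adjacent to $b$ iff the directed distance from $a$ to $b$ in $Y$ is $i$. For a digraph $Z$ with $01$-adjacency matrix $A(Z)$, its skew-adjacency matrix is $S(Z)=A(Z)-A(Z)^T$. *)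

theory Defs
  imports Complex_Main
begin

definition simple_graph :: "'a set \<Rightarrow> ('a \<Rightarrow> 'a \<Rightarrow> bool) \<Rightarrow> bool" where
  "simple_graph V E \<longleftrightarrow> finite V \<and> V \<noteq> {} \<and>
     (\<forall>u v. E u v \<longrightarrow> u \<in> V \<and> v \<in> V) \<and>
     (\<forall>u v. E u v \<longrightarrow> E v u) \<and> (\<forall>u. \<not> E u u)"

definition edge_rel :: "('a \<Rightarrow> 'a \<Rightarrow> bool) \<Rightarrow> ('a \<times> 'a) set" where
  "edge_rel E = {(u, v). E u v}"

definition connected_graph :: "'a set \<Rightarrow> ('a \<Rightarrow> 'a \<Rightarrow> bool) \<Rightarrow> bool" where
  "connected_graph V E \<longleftrightarrow> (\<forall>u\<in>V. \<forall>v\<in>V. \<exists>n. (u, v) \<in> edge_rel E ^^ n)"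

definition gdist :: "('a \<Rightarrow> 'a \<Rightarrow> bool) \<Rightarrow> 'a \<Rightarrow> 'a \<Rightarrow> nat" where
  "gdist E u v = (LEAST n. (u, v) \<in> edge_rel E ^^ n)"

definition regular_graph :: "'a set \<Rightarrow> ('a \<Rightarrow> 'a \<Rightarrow> bool) \<Rightarrow> nat \<Rightarrow> bool" where
  "regular_graph V E k \<longleftrightarrow> (\<forall>v\<in>V. card {w\<in>V. E v w} = k)"

definition distance_regular :: "'a set \<Rightarrow> ('a \<Rightarrow> 'a \<Rightarrow> bool) \<Rightarrow> bool" where
  "distance_regular V E \<longleftrightarrow> simple_graph V E \<and> connected_graph V E \<and>
     (\<forall>u\<in>V. \<forall>v\<in>V. \<forall>u'\<in>V. \<forall>v'\<in>V. gdist E u v = gdist E u' v' \<longrightarrow>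
        (\<forall>i j. card {w\<in>V. gdist E u w = i \<and> gdist E v w = j}
             = card {w\<in>V. gdist E u' w = i \<and> gdist E v' w = j}))"

definition diameter :: "'a set \<Rightarrow> ('a \<Rightarrow> 'a \<Rightarrow> bool) \<Rightarrow> nat" where
  "diameter V E = Max {gdist E u v | u v. u \<in> V \<and> v \<in> V}"

definition arcs :: "('a \<Rightarrow> 'a \<Rightarrow> bool) \<Rightarrow> ('a \<times> 'a) set" where
  "arcs E = {(a, b). E a b}"

definition LD_rel :: "('a \<Rightarrow> 'a \<Rightarrow> bool) \<Rightarrow> (('a \<times> 'a) \<times> ('a \<times> 'a)) set" where
  "LD_rel E = {((a, b), (c, d)). E a b \<and> E c d \<and> b = c}"

definition dist_digraph :: "'b set \<Rightarrow> ('b \<times> 'b) set \<Rightarrow> nat \<Rightarrow> 'b \<Rightarrow> 'b \<Rightarrow> bool" where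
  "dist_digraph W R i x y \<longleftrightarrow> x \<in> W \<and> y \<in> W \<and> (x, y) \<in> R ^^ i \<and> (\<forall>m<i. (x, y) \<notin> R ^^ m)"

definition adj_mat :: "('b \<Rightarrow> 'b \<Rightarrow> bool) \<Rightarrow> 'b \<Rightarrow> 'b \<Rightarrow> real" where
  "adj_mat Z x y = (if Z x y then 1 else 0)"

definition skew_mat :: "('b \<Rightarrow> 'b \<Rightarrow> bool) \<Rightarrow> 'b \<Rightarrow> 'b \<Rightarrow> real" where
  "skew_mat Z x y = adj_mat Z x y - adj_mat Z y x"

definition mat_mult_on :: "'b set \<Rightarrow> ('b \<Rightarrow> 'b \<Rightarrow> real) \<Rightarrow> ('b \<Rightarrow> 'b \<Rightarrow> real) \<Rightarrow> 'b \<Rightarrow> 'b \<Rightarrow> real" where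
  "mat_mult_on W M N x y = (\<Sum>z\<in>W. M x z * N z y)"

definition lin_dependent_mats :: "'b set \<Rightarrow> nat \<Rightarrow> (nat \<Rightarrow> 'b \<Rightarrow> 'b \<Rightarrow> real) \<Rightarrow> bool" where
  "lin_dependent_mats W n M \<longleftrightarrow> (\<exists>c :: nat \<Rightarrow> real. (\<exists>i\<le>n. c i \<noteq> 0) \<and>
      (\<forall>x\<in>W. \<forall>y\<in>W. (\<Sum>i\<le>n. c i * M i x y) = 0))"

end

theory Submission imports Defs begin

lemma relpow_sym:
  assumes sym: "\<forall>u v. E u v \<longrightarrow> E v u"
  shows "(u,v) \<in> edge_rel E ^^ n \<Longrightarrow> (v,u) \<in> edge_rel E ^^ n"
proof (induction n arbitrary: v)
  case 0 then show ?case by simp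
next
  case (Suc n)
  then obtain w where w: "(u,w) \<in> edge_rel E ^^ n" "(w,v) \<in> edge_rel E" by (auto elim: relpow_Suc_E)
  have "(v,w) \<in> edge_rel E" using w(2) sym by (auto simp: edge_rel_def)
  then show ?case using Suc.IH[OF w(1)] by (rule relpow_Suc_I2)
qed

lemma gdist_sym:
  assumes sym: "\<forall>u v. E u v \<longrightarrow> E v u"
  shows "gdist E u v = gdist E v u"
proof -
  have "\<And>n. (u,v) \<in> edge_rel E ^^ n \<longleftrightarrow> (v,u) \<in> edge_rel E ^^ n"
    using relpow_sym[OF sym] by blast
  then show ?thesis unfolding gdist_def by simp
qed

lemma gdist_eq:
  assumes "\<exists>n. (u,v) \<in> edge_rel E ^^ n"
  shows "gdist E u v = n \<longleftrightarrow> (u,v) \<in> edge_rel E ^^ n \<and> (\<forall>m<n. (u,v) \<notin> edge_rel E ^^ m)"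
proof
  assume "gdist E u v = n"
  then show "(u,v) \<in> edge_rel E ^^ n \<and> (\<forall>m<n. (u,v) \<notin> edge_rel E ^^ m)"
    unfolding gdist_def using assms by (metis LeastI_ex not_less_Least)
next
  assume h: "(u,v) \<in> edge_rel E ^^ n \<and> (\<forall>m<n. (u,v) \<notin> edge_rel E ^^ m)"
  show "gdist E u v = n" unfolding gdist_def
    by (rule Least_equality) (use h in \<open>auto simp: not_less[symmetric]\<close>)
qed

lemma LD_relpow:
  "((a,b),(c,d)) \<in> LD_rel E ^^ Suc n \<longleftrightarrow> E a b \<and> E c d \<and> (b,c) \<in> edge_rel E ^^ n"
proof (induction n arbitrary: c d)
  case 0 then show ?case by (auto simp: LD_rel_def)
next
  case (Suc n)
  have "((a,b),(c,d)) \<in> LD_rel E ^^ Suc (Suc n) \<longleftrightarrow>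
        (\<exists>e f. ((a,b),(e,f)) \<in> LD_rel E ^^ Suc n \<and> ((e,f),(c,d)) \<in> LD_rel E)"
    by (simp only: relpow.simps(2) relcomp_unfold) fastforce
  also have "\<dots> \<longleftrightarrow> (\<exists>e f. E a b \<and> E e f \<and> (b,e) \<in> edge_rel E ^^ n \<and> E c d \<and> f = c)"
    using Suc.IH by (auto simp: LD_rel_def)
  also have "\<dots> \<longleftrightarrow> E a b \<and> E c d \<and> (b,c) \<in> edge_rel E ^^ Suc n"
    by (auto simp: edge_rel_def elim!: relpow_Suc_E intro: relpow_Suc_I)
  finally show ?case .
qed


definition dm :: "('a \<Rightarrow> 'a \<Rightarrow> bool) \<Rightarrow> nat \<Rightarrow> 'a \<Rightarrow> 'a \<Rightarrow> real" where
  "dm E n u v = (if gdist E u v = n then 1 else 0)"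

lemma skew0: "skew_mat (dist_digraph W R 0) x y = 0"
  by (auto simp: skew_mat_def adj_mat_def dist_digraph_def)

lemma conn_ex: "connected_graph V E \<Longrightarrow> u \<in> V \<Longrightarrow> v \<in> V \<Longrightarrow> \<exists>n. (u,v) \<in> edge_rel E ^^ n"
  unfolding connected_graph_def by blast

lemma dd_Suc:
  assumes sg: "simple_graph V E" and cg: "connected_graph V E"
    and x: "(a,b) \<in> arcs E" and y: "(c,e) \<in> arcs E"
  shows "dist_digraph (arcs E) (LD_rel E) (Suc n) (a,b) (c,e) \<longleftrightarrow> (a,b) \<noteq> (c,e) \<and> gdist E b c = n"
proof -
  have E: "E a b" "E c e" using x y by (auto simp: arcs_def)
  have V: "b \<in> V" "c \<in> V" using E sg by (auto simp: simple_graph_def)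
  have ex: "\<exists>n. (b,c) \<in> edge_rel E ^^ n" using conn_ex[OF cg V] .
  have "dist_digraph (arcs E) (LD_rel E) (Suc n) (a,b) (c,e) \<longleftrightarrow>
     (b,c) \<in> edge_rel E ^^ n \<and> ((a,b),(c,e)) \<notin> LD_rel E ^^ 0 \<and> (\<forall>m<n. ((a,b),(c,e)) \<notin> LD_rel E ^^ Suc m)"
    unfolding dist_digraph_def using x y E by (simp del: relpow.simps(2) add: LD_relpow All_less_Suc2)
  also have "\<dots> \<longleftrightarrow> (a,b) \<noteq> (c,e) \<and> (b,c) \<in> edge_rel E ^^ n \<and> (\<forall>m<n. (b,c) \<notin> edge_rel E ^^ m)"
    using E by (auto simp del: relpow.simps(2) simp: LD_relpow)
  also have "\<dots> \<longleftrightarrow> (a,b) \<noteq> (c,e) \<and> gdist E b c = n"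
    using gdist_eq[OF ex] by blast
  finally show ?thesis .
qed

lemma entry:
  assumes sg: "simple_graph V E" and cg: "connected_graph V E"
    and x: "(a,b) \<in> arcs E" and y: "(c,e) \<in> arcs E"
  shows "skew_mat (dist_digraph (arcs E) (LD_rel E) (Suc n)) (a,b) (c,e) = dm E n b c - dm E n e a"
  using dd_Suc[OF sg cg x y, of n] dd_Suc[OF sg cg y x, of n]
  by (auto simp: skew_mat_def adj_mat_def dm_def)


lemma sum_if_card: "finite V \<Longrightarrow> (\<Sum>w\<in>V. if P w then 1 else 0 :: real) = real (card {w\<in>V. P w})"
  by (simp add: sum.inter_filter[symmetric])

lemma mm_assoc:
  "mat_mult_on V (mat_mult_on V M N) L x y = mat_mult_on V M (mat_mult_on V N L) x y"
  unfolding mat_mult_on_def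
  by (simp add: sum_distrib_left sum_distrib_right mult.assoc) (rule sum.swap)

lemma mm_cong_r:
  "(\<forall>u\<in>V. \<forall>w\<in>V. N u w = N' u w) \<Longrightarrow> v \<in> V \<Longrightarrow> mat_mult_on V M N x v = mat_mult_on V M N' x v"
  unfolding mat_mult_on_def by (intro sum.cong) auto

lemma mm_cong_l:
  "(\<forall>u\<in>V. \<forall>w\<in>V. M u w = M' u w) \<Longrightarrow> x \<in> V \<Longrightarrow> mat_mult_on V M N x v = mat_mult_on V M' N x v"
  unfolding mat_mult_on_def by (intro sum.cong) auto

lemma dm_comm:
  assumes dr: "distance_regular V E" and u: "u \<in> V" and v: "v \<in> V"
  shows "mat_mult_on V (dm E p) (dm E q) u v = mat_mult_on V (dm E q) (dm E p) u v"
proof -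
  have sg: "simple_graph V E" using dr by (simp add: distance_regular_def)
  then have fin: "finite V" and sym: "\<forall>u v. E u v \<longrightarrow> E v u" by (auto simp: simple_graph_def)
  have gs: "\<And>x y. gdist E x y = gdist E y x" using gdist_sym[OF sym] .
  have 1: "\<And>p q. mat_mult_on V (dm E p) (dm E q) u v = real (card {w\<in>V. gdist E u w = p \<and> gdist E v w = q})"
    unfolding mat_mult_on_def dm_def using fin
    by (subst sum_if_card[symmetric]) (auto intro!: sum.cong simp: gs[of _ v])
  have dr2: "card {w\<in>V. gdist E u w = q \<and> gdist E v w = p} = card {w\<in>V. gdist E v w = q \<and> gdist E u w = p}"
    using dr u v gs[of u v] unfolding distance_regular_def by blast
  have "{w\<in>V. gdist E v w = q \<and> gdist E u w = p} = {w\<in>V. gdist E u w = p \<and> gdist E v w = q}" by blast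
  then show ?thesis using 1 dr2 by simp
qed

lemma dm_comm':
  assumes dr: "distance_regular V E"
  shows "\<forall>u\<in>V. \<forall>v\<in>V. mat_mult_on V (dm E p) (dm E q) u v = mat_mult_on V (dm E q) (dm E p) u v"
  using dm_comm[OF dr] by blast

lemma dm_triple:
  assumes dr: "distance_regular V E" and u: "u \<in> V" and v: "v \<in> V"
  shows "mat_mult_on V (dm E p) (mat_mult_on V (dm E r) (dm E q)) u v
       = mat_mult_on V (dm E q) (mat_mult_on V (dm E r) (dm E p)) u v"
proof -
  have "mat_mult_on V (dm E p) (mat_mult_on V (dm E r) (dm E q)) u v
      = mat_mult_on V (dm E p) (mat_mult_on V (dm E q) (dm E r)) u v"
    by (rule mm_cong_r[OF dm_comm'[OF dr] v])
  also have "\<dots> = mat_mult_on V (mat_mult_on V (dm E p) (dm E q)) (dm E r) u v"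
    by (rule mm_assoc[symmetric])
  also have "\<dots> = mat_mult_on V (mat_mult_on V (dm E q) (dm E p)) (dm E r) u v"
    by (rule mm_cong_l[OF dm_comm'[OF dr] u])
  also have "\<dots> = mat_mult_on V (dm E q) (mat_mult_on V (dm E p) (dm E r)) u v"
    by (rule mm_assoc)
  also have "\<dots> = mat_mult_on V (dm E q) (mat_mult_on V (dm E r) (dm E p)) u v"
    by (rule mm_cong_r[OF dm_comm'[OF dr] v])
  finally show ?thesis .
qed

lemma adj_dm1:
  assumes sg: "simple_graph V E" and cg: "connected_graph V E" and u: "u \<in> V" and v: "v \<in> V"
  shows "(if E u v then 1 else 0) = dm E 1 u v"
proof -
  have "gdist E u v = 1 \<longleftrightarrow> (u,v) \<in> edge_rel E ^^ 1 \<and> (\<forall>m<1. (u,v) \<notin> edge_rel E ^^ m)"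
    by (rule gdist_eq[OF conn_ex[OF cg u v]])
  also have "\<dots> \<longleftrightarrow> E u v" using sg by (auto simp: edge_rel_def simple_graph_def)
  finally show ?thesis by (simp add: dm_def)
qed

lemma deg:
  assumes sg: "simple_graph V E" and cg: "connected_graph V E" and rg: "regular_graph V E k" and c: "c \<in> V"
  shows "(\<Sum>d\<in>V. dm E 1 c d) = real k"
proof -
  have fin: "finite V" using sg by (simp add: simple_graph_def)
  have "(\<Sum>d\<in>V. dm E 1 c d) = (\<Sum>d\<in>V. if E c d then 1 else 0)"
    using adj_dm1[OF sg cg c] by simp
  also have "\<dots> = real (card {d\<in>V. E c d})" by (rule sum_if_card[OF fin])
  finally show ?thesis using rg c by (simp add: regular_graph_def)
qed


lemma arcsum:
  assumes sg: "simple_graph V E"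
  shows "(\<Sum>z\<in>arcs E. g z) = (\<Sum>c\<in>V. \<Sum>d\<in>V. (if E c d then 1 else 0) * (g (c,d) :: real))"
proof -
  have fin: "finite V" using sg by (simp add: simple_graph_def)
  have "arcs E = Sigma V (\<lambda>c. {d\<in>V. E c d})" using sg by (auto simp: arcs_def simple_graph_def)
  then have "(\<Sum>z\<in>arcs E. g z) = (\<Sum>c\<in>V. \<Sum>d\<in>{d\<in>V. E c d}. g (c,d))"
    using fin by (simp add: sum.Sigma)
  also have "\<dots> = (\<Sum>c\<in>V. \<Sum>d\<in>V. (if E c d then 1 else 0) * g (c,d))"
  proof (rule sum.cong[OF refl])
    fix c assume "c \<in> V"
    have "(\<Sum>d\<in>{d\<in>V. E c d}. g (c,d)) = (\<Sum>d\<in>V. if E c d then g (c,d) else 0)"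
      by (rule sum.inter_filter[OF fin])
    then show "(\<Sum>d\<in>{d\<in>V. E c d}. g (c,d)) = (\<Sum>d\<in>V. (if E c d then 1 else 0) * g (c,d))"
      by (auto intro!: sum.cong)
  qed
  finally show ?thesis .
qed

lemma dm_sym: "simple_graph V E \<Longrightarrow> dm E n u v = dm E n v u"
  unfolding dm_def using gdist_sym[of E u v] by (auto simp: simple_graph_def)

lemma prod_formula:
  fixes p q :: nat
  assumes dr: "distance_regular V E" and rg: "regular_graph V E k"
    and x: "(a,b) \<in> arcs E" and y: "(y1,y2) \<in> arcs E"
  defines "S \<equiv> (\<lambda>i. skew_mat (dist_digraph (arcs E) (LD_rel E) i))"
    and "P \<equiv> dm E p" and "Q \<equiv> dm E q" and "A \<equiv> dm E 1"
  shows "mat_mult_on (arcs E) (S (Suc p)) (S (Suc q)) (a,b) (y1,y2) =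
     mat_mult_on V P (mat_mult_on V A Q) b y1 - real k * mat_mult_on V P Q b y2
     - real k * mat_mult_on V P Q a y1 + mat_mult_on V Q (mat_mult_on V A P) y2 a"
proof -
  have sg: "simple_graph V E" and cg: "connected_graph V E" using dr by (auto simp: distance_regular_def)
  have fin: "finite V" using sg by (simp add: simple_graph_def)
  have xV: "a \<in> V" "b \<in> V" "y1 \<in> V" "y2 \<in> V" using x y sg by (auto simp: arcs_def simple_graph_def)
  have Ps: "\<And>u v. P u v = P v u" "\<And>u v. Q u v = Q v u" "\<And>u v. A u v = A v u"
    unfolding P_def Q_def A_def using dm_sym[OF sg] by blast+
  have "mat_mult_on (arcs E) (S (Suc p)) (S (Suc q)) (a,b) (y1,y2) =
     (\<Sum>z\<in>arcs E. (P b (fst z) - P (snd z) a) * (Q (snd z) y1 - Q y2 (fst z)))"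
    unfolding mat_mult_on_def S_def P_def Q_def
    by (intro sum.cong refl) (auto simp: entry[OF sg cg x] entry[OF sg cg _ y])
  also have "\<dots> = (\<Sum>c\<in>V. \<Sum>d\<in>V. A c d * ((P b c - P d a) * (Q d y1 - Q y2 c)))"
    unfolding arcsum[OF sg] A_def using adj_dm1[OF sg cg] by (intro sum.cong refl) auto
  also have "\<dots> = (\<Sum>c\<in>V. \<Sum>d\<in>V. A c d * P b c * Q d y1) - (\<Sum>c\<in>V. \<Sum>d\<in>V. A c d * P b c * Q y2 c)
      - (\<Sum>c\<in>V. \<Sum>d\<in>V. A c d * P d a * Q d y1) + (\<Sum>c\<in>V. \<Sum>d\<in>V. A c d * P d a * Q y2 c)"
    by (simp add: sum_subtractf sum.distrib algebra_simps)
  also have "(\<Sum>c\<in>V. \<Sum>d\<in>V. A c d * P b c * Q d y1) = mat_mult_on V P (mat_mult_on V A Q) b y1"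
    unfolding mat_mult_on_def by (simp add: sum_distrib_left algebra_simps)
  also have "(\<Sum>c\<in>V. \<Sum>d\<in>V. A c d * P b c * Q y2 c) = real k * mat_mult_on V P Q b y2"
  proof -
    have "(\<Sum>c\<in>V. \<Sum>d\<in>V. A c d * P b c * Q y2 c) = (\<Sum>c\<in>V. P b c * Q y2 c * (\<Sum>d\<in>V. A c d))"
      by (simp add: sum_distrib_left algebra_simps)
    also have "\<dots> = (\<Sum>c\<in>V. real k * (P b c * Q c y2))"
      using deg[OF sg cg rg] Ps(2) unfolding A_def by (intro sum.cong refl) auto
    finally show ?thesis unfolding mat_mult_on_def by (simp add: sum_distrib_left)
  qed
  also have "(\<Sum>c\<in>V. \<Sum>d\<in>V. A c d * P d a * Q d y1) = real k * mat_mult_on V P Q a y1"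
  proof -
    have "(\<Sum>c\<in>V. \<Sum>d\<in>V. A c d * P d a * Q d y1) = (\<Sum>d\<in>V. \<Sum>c\<in>V. A c d * P d a * Q d y1)"
      by (rule sum.swap)
    also have "\<dots> = (\<Sum>d\<in>V. P a d * Q d y1 * (\<Sum>c\<in>V. A d c))"
      using Ps by (simp add: sum_distrib_left algebra_simps)
    also have "\<dots> = (\<Sum>d\<in>V. real k * (P a d * Q d y1))"
      using deg[OF sg cg rg] unfolding A_def by (intro sum.cong refl) auto
    finally show ?thesis unfolding mat_mult_on_def by (simp add: sum_distrib_left)
  qed
  also have "(\<Sum>c\<in>V. \<Sum>d\<in>V. A c d * P d a * Q y2 c) = mat_mult_on V Q (mat_mult_on V A P) y2 a"
    unfolding mat_mult_on_def using Ps by (simp add: sum_distrib_left algebra_simps)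
  finally show ?thesis .
qed


theorem corollary4p4:
  fixes V :: "'a set" and E :: "'a \<Rightarrow> 'a \<Rightarrow> bool" and k d :: nat
  assumes "distance_regular V E"
    and "regular_graph V E k"
    and "d = diameter V E"
  defines "S \<equiv> (\<lambda>i. skew_mat (dist_digraph (arcs E) (LD_rel E) i))"
  shows "lin_dependent_mats (arcs E) (d + 1) S \<and>
    (\<forall>i\<le>d + 1. \<forall>j\<le>d + 1. \<forall>x\<in>arcs E. \<forall>y\<in>arcs E.
           mat_mult_on (arcs E) (S i) (S j) x y = mat_mult_on (arcs E) (S j) (S i) x y)"
proof
  have S0: "\<And>x y. S 0 x y = 0" unfolding S_def by (rule skew0)
  show "lin_dependent_mats (arcs E) (d + 1) S"
    unfolding lin_dependent_mats_def
    by (rule exI[of _ "\<lambda>i. if i = 0 then 1 else 0"]) (auto intro!: sum.neutral simp: S0)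
  have comm: "mat_mult_on (arcs E) (S i) (S j) x y = mat_mult_on (arcs E) (S j) (S i) x y"
    if x: "x \<in> arcs E" and y: "y \<in> arcs E" for i j x y
  proof (cases "i = 0 \<or> j = 0")
    case True
    then show ?thesis by (auto simp: mat_mult_on_def S0)
  next
    case False
    then obtain p q where ij: "i = Suc p" "j = Suc q" by (metis not0_implies_Suc)
    obtain a b where xab: "x = (a,b)" by fastforce
    obtain y1 y2 where yy: "y = (y1,y2)" by fastforce
    have sg: "simple_graph V E" using assms(1) by (simp add: distance_regular_def)
    have xV: "a \<in> V" "b \<in> V" "y1 \<in> V" "y2 \<in> V" using x y sg xab yy by (auto simp: arcs_def simple_graph_def)
    note pf = prod_formula[OF assms(1,2), folded S_def]
    have c1: "mat_mult_on V (dm E p) (dm E q) u v = mat_mult_on V (dm E q) (dm E p) u v"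
      if "u \<in> V" "v \<in> V" for u v using dm_comm[OF assms(1) that] .
    show ?thesis unfolding ij xab yy
      using pf[OF x[unfolded xab] y[unfolded yy], of p q] pf[OF x[unfolded xab] y[unfolded yy], of q p]
        dm_triple[OF assms(1) xV(2) xV(3), of p 1 q] dm_triple[OF assms(1) xV(4) xV(1), of p 1 q]
        c1[OF xV(2) xV(4)] c1[OF xV(1) xV(3)]
      by (simp add: S_def)
  qed
  then show "\<forall>i\<le>d + 1. \<forall>j\<le>d + 1. \<forall>x\<in>arcs E. \<forall>y\<in>arcs E.
           mat_mult_on (arcs E) (S i) (S j) x y = mat_mult_on (arcs E) (S j) (S i) x y" by blast
qed

end
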